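(* Let $X$ be a centered isotropic random vector in $\mathbb{R}^n$ and let $X_1,\dots,X_N$ be independent copies of $X$. Assume that for some $p>2$ and $B\geq 1$ we have $\mathbb{E}|\langle X,y\rangle|^p\leq B$ for all $y\in S^{n-1}$. For $H>0$ let $G_H$ be the random graph on vertex set $[N]$ whose edges are the pairs $(i,j)$ with $1\leq i<j\leq N$ and $|\langle X_i,X_j\rangle|>H\max_{h\leq N}\|X_h\|$. Then for any $H>0$ and any integer $m>1$, the chromatic number satisfies $\chi(G_H)\leq m$ with probability at least $1-(BNH^{-p})^m n^{p/2}$.
   Context: Isotropic means $\mathbb{E}XX^T=\mathrm{Id}_n$. $\chi(G)$ is the smallest number of colors in a proper vertex coloring of the graph $G$. *)

theory Defs
  imports "HOL-Probability.Probability"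
begin

text \<open>Simple graphs given by a vertex set V and an edge set Ed of (unordered) pairs,
  represented as ordered pairs (i,j).\<close>

definition proper_colouring :: "'v set \<Rightarrow> ('v \<times> 'v) set \<Rightarrow> nat \<Rightarrow> ('v \<Rightarrow> nat) \<Rightarrow> bool" where
  "proper_colouring V Ed k c \<longleftrightarrow> (\<forall>v\<in>V. c v < k) \<and> (\<forall>(u,v)\<in>Ed. c u \<noteq> c v)"

definition chromatic_number :: "'v set \<Rightarrow> ('v \<times> 'v) set \<Rightarrow> nat" where
  "chromatic_number V Ed = (LEAST k. \<exists>c. proper_colouring V Ed k c)"

definition GH_edges :: "(nat \<Rightarrow> real ^ 'n) \<Rightarrow> nat \<Rightarrow> real \<Rightarrow> (nat \<times> nat) set" where
  "GH_edges x N H = {(i,j). 1 \<le> i \<and> i < j \<and> j \<le> N \<and>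
      \<bar>x i \<bullet> x j\<bar> > H * Max ((\<lambda>h. norm (x h)) ` {1..N})}"

end

theory Submission
  imports Defs
begin

lemma greedy_colour:
  fixes V :: "'v set" and f :: "'v \<Rightarrow> real" and Ed :: "('v\<times>'v) set"
  assumes "finite V"
    and noloop: "\<And>v. (v,v) \<notin> Ed"
    and deg: "\<And>v. v \<in> V \<Longrightarrow> card {w\<in>V. w \<noteq> v \<and> ((w,v)\<in>Ed \<or> (v,w)\<in>Ed) \<and> f w \<le> f v} < m"
  shows "\<exists>c. (\<forall>v\<in>V. c v < m) \<and> (\<forall>u\<in>V. \<forall>w\<in>V. (u,w)\<in>Ed \<longrightarrow> c u \<noteq> c w)"
  using assms(1) deg
proof (induction V rule: finite_ranking_induct[where f=f])
  case empty
  then show ?case by auto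
next
  case (insert x S)
  have "\<exists>c. (\<forall>v\<in>S. c v < m) \<and> (\<forall>u\<in>S. \<forall>w\<in>S. (u,w)\<in>Ed \<longrightarrow> c u \<noteq> c w)"
  proof (rule insert.IH)
    fix v assume v: "v \<in> S"
    have "card {w\<in>S. w \<noteq> v \<and> ((w,v)\<in>Ed \<or> (v,w)\<in>Ed) \<and> f w \<le> f v}
        \<le> card {w\<in>insert x S. w \<noteq> v \<and> ((w,v)\<in>Ed \<or> (v,w)\<in>Ed) \<and> f w \<le> f v}"
      by (rule card_mono) (use insert.hyps in auto)
    also have "\<dots> < m" using insert.prems v by auto
    finally show "card {w\<in>S. w \<noteq> v \<and> ((w,v)\<in>Ed \<or> (v,w)\<in>Ed) \<and> f w \<le> f v} < m" .
  qed
  then obtain c where c: "\<forall>v\<in>S. c v < m" "\<forall>u\<in>S. \<forall>w\<in>S. (u,w)\<in>Ed \<longrightarrow> c u \<noteq> c w" by blast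
  show ?case
  proof (cases "x \<in> S")
    case True
    then have "insert x S = S" by auto
    then show ?thesis using c by auto
  next
    case False
    define Nb where "Nb = {w\<in>S. (w,x)\<in>Ed \<or> (x,w)\<in>Ed}"
    have "Nb \<subseteq> {w\<in>insert x S. w \<noteq> x \<and> ((w,x)\<in>Ed \<or> (x,w)\<in>Ed) \<and> f w \<le> f x}"
      using False insert.hyps(2) by (auto simp: Nb_def)
    then have "card Nb \<le> card {w\<in>insert x S. w \<noteq> x \<and> ((w,x)\<in>Ed \<or> (x,w)\<in>Ed) \<and> f w \<le> f x}"
      by (intro card_mono) (use insert.hyps(1) in auto)
    also have "\<dots> < m" using insert.prems by auto
    finally have cNb: "card Nb < m" .
    have "card (c ` Nb) < card {0..<m}"
      using cNb card_image_le[of Nb c] insert.hyps(1) by (auto simp: Nb_def)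
    then have "\<not> {0..<m} \<subseteq> c ` Nb"
      using card_mono[of "c ` Nb" "{0..<m}"] insert.hyps(1) by (auto simp: Nb_def)
    then obtain k where k: "k < m" "k \<notin> c ` Nb" by (auto simp: subset_iff)
    define c' where "c' = c(x := k)"
    have "\<forall>v\<in>insert x S. c' v < m" using c k by (auto simp: c'_def)
    moreover have "\<forall>u\<in>insert x S. \<forall>w\<in>insert x S. (u,w)\<in>Ed \<longrightarrow> c' u \<noteq> c' w"
      using c k False noloop by (auto simp: c'_def Nb_def)
    ultimately show ?thesis by blast
  qed
qed


lemma power_mean_sum:
  fixes a :: "'i \<Rightarrow> real"
  assumes I: "finite I" and a: "\<And>i. i \<in> I \<Longrightarrow> a i \<ge> 0" and q: "q \<ge> 1"
  shows "(\<Sum>i\<in>I. a i) powr q \<le> real (card I) powr (q - 1) * (\<Sum>i\<in>I. a i powr q)"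
proof -
  define P where "P = {i\<in>I. a i > 0}"
  have PI: "P \<subseteq> I" and fP: "finite P" using I by (auto simp: P_def)
  have sP: "(\<Sum>i\<in>I. a i) = (\<Sum>i\<in>P. a i)"
    by (rule sum.mono_neutral_right[OF I PI]) (use a in \<open>force simp: P_def\<close>)
  have sPq: "(\<Sum>i\<in>P. a i powr q) \<le> (\<Sum>i\<in>I. a i powr q)"
    by (rule sum_mono2[OF I PI]) auto
  show ?thesis
  proof (cases "P = {}")
    case True
    then show ?thesis using sP q by (auto intro!: mult_nonneg_nonneg sum_nonneg)
  next
    case False
    define k where "k = real (card P)"
    have k: "k \<ge> 1" using False fP by (auto simp: k_def Suc_le_eq card_gt_0_iff)
    have "(\<Sum>i\<in>P. (1/k) *\<^sub>R a i) powr q \<le> (\<Sum>i\<in>P. (1/k) * a i powr q)"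
      by (rule convex_on_sum[OF fP False powr_convex[OF q]])
         (use k in \<open>auto simp: k_def P_def\<close>)
    also have "(\<Sum>i\<in>P. (1/k) *\<^sub>R a i) = (\<Sum>i\<in>P. a i) / k"
      by (simp add: sum_divide_distrib)
    also have "(\<Sum>i\<in>P. (1/k) * a i powr q) = (\<Sum>i\<in>P. a i powr q) / k"
      by (simp add: sum_divide_distrib)
    finally have "(\<Sum>i\<in>P. a i) powr q / k powr q \<le> (\<Sum>i\<in>P. a i powr q) / k"
      using k by (simp add: powr_divide sum_nonneg P_def less_imp_le)
    then have "(\<Sum>i\<in>P. a i) powr q \<le> k powr q * ((\<Sum>i\<in>P. a i powr q) / k)"
      using k by (simp add: divide_le_eq mult.commute)
    also have "k powr q * ((\<Sum>i\<in>P. a i powr q) / k) = k powr (q - 1) * (\<Sum>i\<in>P. a i powr q)"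
      using k by (simp add: powr_diff)
    also have "\<dots> \<le> real (card I) powr (q - 1) * (\<Sum>i\<in>I. a i powr q)"
    proof (rule mult_mono)
      show "k powr (q - 1) \<le> real (card I) powr (q - 1)"
        using k q card_mono[OF I PI] by (auto simp: k_def intro!: powr_mono2)
    qed (use sPq in \<open>auto intro!: sum_nonneg\<close>)
    finally show ?thesis using sP by simp
  qed
qed

lemma norm_powr_le:
  fixes x :: "real ^ 'n" and p :: real
  assumes p: "p \<ge> 2"
  shows "norm x powr p \<le> real CARD('n) powr (p/2 - 1) * (\<Sum>i\<in>UNIV. \<bar>x $ i\<bar> powr p)"
proof -
  have nx: "norm x = sqrt (\<Sum>i\<in>UNIV. (x$i)^2)"
    by (simp add: norm_eq_sqrt_inner inner_vec_def power2_eq_square)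
  have sq: "sqrt s powr p = s powr (p/2)" if "s \<ge> 0" for s :: real
    using that by (simp add: powr_half_sqrt[symmetric] powr_powr)
  have ab: "\<bar>t\<bar> powr p = (t^2) powr (p/2)" for t :: real
  proof -
    have "t^2 = \<bar>t\<bar> powr 2" by (cases "t = 0") (simp_all add: powr_realpow)
    then have "(t^2) powr (p/2) = (\<bar>t\<bar> powr 2) powr (p/2)" by simp
    also have "\<dots> = \<bar>t\<bar> powr (2 * (p/2))" by (simp only: powr_powr)
    finally have "(t^2) powr (p/2) = \<bar>t\<bar> powr (2 * (p/2))" .
    then show ?thesis by simp
  qed
  have "norm x powr p = (\<Sum>i\<in>UNIV. (x$i)^2) powr (p/2)"
    unfolding nx by (rule sq) (auto intro: sum_nonneg)
  also have "\<dots> \<le> real CARD('n) powr (p/2 - 1) * (\<Sum>i\<in>UNIV. ((x$i)^2) powr (p/2))"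
    by (rule power_mean_sum) (use p in auto)
  also have "(\<Sum>i\<in>UNIV. ((x$i)^2) powr (p/2)) = (\<Sum>i\<in>UNIV. \<bar>x $ i\<bar> powr p)"
    by (simp add: ab)
  finally show ?thesis .
qed

lemma norm_moment:
  fixes M :: "'a measure" and X :: "'a \<Rightarrow> real ^ 'n" and p B :: real
  assumes X_rv[measurable]: "X \<in> borel_measurable M" and p: "p \<ge> 2"
    and moment: "\<And>y. norm y = 1 \<Longrightarrow> (\<integral>\<^sup>+\<omega>. ennreal (\<bar>X \<omega> \<bullet> y\<bar> powr p) \<partial>M) \<le> ennreal B"
  shows "(\<integral>\<^sup>+\<omega>. ennreal (norm (X \<omega>) powr p) \<partial>M) \<le> ennreal (real CARD('n) powr (p/2) * B)"
proof -
  define c where "c = real CARD('n) powr (p/2 - 1)"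
  have c: "c \<ge> 0" by (simp add: c_def)
  have "(\<integral>\<^sup>+\<omega>. ennreal (norm (X \<omega>) powr p) \<partial>M)
      \<le> (\<integral>\<^sup>+\<omega>. ennreal c * (\<Sum>i\<in>UNIV. ennreal (\<bar>X \<omega> $ i\<bar> powr p)) \<partial>M)"
  proof (rule nn_integral_mono)
    fix \<omega>
    have "ennreal (norm (X \<omega>) powr p) \<le> ennreal (c * (\<Sum>i\<in>UNIV. \<bar>X \<omega> $ i\<bar> powr p))"
      using norm_powr_le[OF p, of "X \<omega>"] unfolding c_def by (rule ennreal_leI)
    also have "\<dots> = ennreal c * (\<Sum>i\<in>UNIV. ennreal (\<bar>X \<omega> $ i\<bar> powr p))"
      using c by (simp add: ennreal_mult sum_nonneg sum_ennreal)
    finally show "ennreal (norm (X \<omega>) powr p) \<le> ennreal c * (\<Sum>i\<in>UNIV. ennreal (\<bar>X \<omega> $ i\<bar> powr p))" .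
  qed
  also have "\<dots> = ennreal c * (\<Sum>i\<in>UNIV. (\<integral>\<^sup>+\<omega>. ennreal (\<bar>X \<omega> $ i\<bar> powr p) \<partial>M))"
    by (subst nn_integral_cmult, measurable, subst nn_integral_sum, auto simp del: sum_ennreal)
  also have "\<dots> \<le> ennreal c * (\<Sum>i\<in>(UNIV::'n set). ennreal B)"
  proof (intro mult_left_mono sum_mono)
    fix i :: 'n
    have "(\<integral>\<^sup>+\<omega>. ennreal (\<bar>X \<omega> $ i\<bar> powr p) \<partial>M) = (\<integral>\<^sup>+\<omega>. ennreal (\<bar>X \<omega> \<bullet> axis i 1\<bar> powr p) \<partial>M)"
      by (simp add: inner_axis)
    also have "\<dots> \<le> ennreal B" by (rule moment) simp
    finally show "(\<integral>\<^sup>+\<omega>. ennreal (\<bar>X \<omega> $ i\<bar> powr p) \<partial>M) \<le> ennreal B" .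
  qed auto
  also have "\<dots> \<le> ennreal (real CARD('n) powr (p/2) * B)"
  proof (cases "B \<ge> 0")
    case True
    have "c * (real CARD('n) * B) = real CARD('n) powr (p/2) * B"
      by (simp add: c_def powr_diff)
    have "ennreal c * (\<Sum>i\<in>(UNIV::'n set). ennreal B) = ennreal (c * (real CARD('n) * B))"
      using True c by (simp add: ennreal_mult ennreal_of_nat_eq_real_of_nat)
    then show ?thesis by (simp add: \<open>c * (real CARD('n) * B) = _\<close>)
  next
    case False
    then show ?thesis by (simp add: ennreal_neg)
  qed
  finally show ?thesis .
qed

lemma dir_moment:
  fixes M :: "'a measure" and X :: "'a \<Rightarrow> real ^ 'n" and p B H :: real and u :: "real ^ 'n"
  assumes X_rv[measurable]: "X \<in> borel_measurable M" and p: "p > 0" and H: "H > 0" and B: "B \<ge> 0"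
    and moment: "\<And>y. norm y = 1 \<Longrightarrow> (\<integral>\<^sup>+\<omega>. ennreal (\<bar>X \<omega> \<bullet> y\<bar> powr p) \<partial>M) \<le> ennreal B"
  shows "(\<integral>\<^sup>+\<omega>. ennreal ((\<bar>X \<omega> \<bullet> u\<bar> / (H * norm u)) powr p) \<partial>M) \<le> ennreal (B * H powr (-p))"
proof (cases "u = 0")
  case True
  then show ?thesis by simp
next
  case False
  define u' where "u' = u /\<^sub>R norm u"
  have nu': "norm u' = 1" using False by (simp add: u'_def)
  have eq: "(\<bar>X \<omega> \<bullet> u\<bar> / (H * norm u)) powr p = H powr (-p) * \<bar>X \<omega> \<bullet> u'\<bar> powr p" for \<omega>
  proof -
    have "\<bar>X \<omega> \<bullet> u\<bar> / (H * norm u) = \<bar>X \<omega> \<bullet> u'\<bar> / H"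
      using False H by (simp add: u'_def abs_mult field_simps)
    then have "(\<bar>X \<omega> \<bullet> u\<bar> / (H * norm u)) powr p = \<bar>X \<omega> \<bullet> u'\<bar> powr p / H powr p"
      using H by (simp only: powr_divide abs_ge_zero less_imp_le)
    then show ?thesis using H by (simp add: powr_minus divide_inverse mult.commute)
  qed
  have "(\<integral>\<^sup>+\<omega>. ennreal ((\<bar>X \<omega> \<bullet> u\<bar> / (H * norm u)) powr p) \<partial>M)
      = ennreal (H powr (-p)) * (\<integral>\<^sup>+\<omega>. ennreal (\<bar>X \<omega> \<bullet> u'\<bar> powr p) \<partial>M)"
    unfolding eq by (subst nn_integral_cmult[symmetric]) (auto simp: ennreal_mult)
  also have "\<dots> \<le> ennreal (H powr (-p)) * ennreal B"
    by (intro mult_left_mono moment nu') auto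
  also have "\<dots> = ennreal (B * H powr (-p))"
    using B by (simp add: ennreal_mult mult.commute)
  finally show ?thesis .
qed


lemma core_integral:
  fixes D :: "(real ^ 'n) measure" and S :: "nat set" and p H B c :: real
  assumes D: "prob_space D" and sets_D[measurable_cong]: "sets D = sets borel"
    and S: "finite S" "v \<notin> S" and B: "B \<ge> 0"
    and dirD: "\<And>u. (\<integral>\<^sup>+z. ennreal ((\<bar>z \<bullet> u\<bar> / (H * norm u)) powr p) \<partial>D) \<le> ennreal (B * H powr (-p))"
    and normD: "(\<integral>\<^sup>+z. ennreal ((norm z / H) powr p) \<partial>D) \<le> ennreal c"
  shows "(\<integral>\<^sup>+x. ennreal ((norm (x v) / H) powr p) *
            (\<Prod>w\<in>S. ennreal ((\<bar>x w \<bullet> x v\<bar> / (H * norm (x v))) powr p)) \<partial>PiM (insert v S) (\<lambda>_. D))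
         \<le> ennreal c * ennreal (B * H powr (-p)) ^ card S"
proof -
  interpret product_sigma_finite "\<lambda>_. D"
    unfolding product_sigma_finite_def using D prob_space_imp_sigma_finite by blast
  let ?G = "\<lambda>x. ennreal ((norm (x v) / H) powr p) *
            (\<Prod>w\<in>S. ennreal ((\<bar>x w \<bullet> x v\<bar> / (H * norm (x v))) powr p))"
  have meas: "?G \<in> borel_measurable (PiM (insert v S) (\<lambda>_. D))"
    by measurable
  have "(\<integral>\<^sup>+x. ?G x \<partial>PiM (insert v S) (\<lambda>_. D)) = (\<integral>\<^sup>+y. (\<integral>\<^sup>+x. ?G (x(v := y)) \<partial>PiM S (\<lambda>_. D)) \<partial>D)"
    by (rule product_nn_integral_insert_rev[OF S meas])
  also have "\<dots> \<le> (\<integral>\<^sup>+y. ennreal ((norm y / H) powr p) * ennreal (B * H powr (-p)) ^ card S \<partial>D)"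
  proof (rule nn_integral_mono)
    fix y :: "real ^ 'n"
    have "(\<integral>\<^sup>+x. ?G (x(v := y)) \<partial>PiM S (\<lambda>_. D))
        = (\<integral>\<^sup>+x. ennreal ((norm y / H) powr p) *
            (\<Prod>w\<in>S. ennreal ((\<bar>x w \<bullet> y\<bar> / (H * norm y)) powr p)) \<partial>PiM S (\<lambda>_. D))"
      using S by (intro nn_integral_cong) (auto intro!: arg_cong2[where f="(*)"] prod.cong)
    also have "\<dots> = ennreal ((norm y / H) powr p) *
            (\<integral>\<^sup>+x. (\<Prod>w\<in>S. ennreal ((\<bar>x w \<bullet> y\<bar> / (H * norm y)) powr p)) \<partial>PiM S (\<lambda>_. D))"
      by (rule nn_integral_cmult) measurable
    also have "(\<integral>\<^sup>+x. (\<Prod>w\<in>S. ennreal ((\<bar>x w \<bullet> y\<bar> / (H * norm y)) powr p)) \<partial>PiM S (\<lambda>_. D))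
        = (\<Prod>w\<in>S. (\<integral>\<^sup>+z. ennreal ((\<bar>z \<bullet> y\<bar> / (H * norm y)) powr p) \<partial>D))"
      by (rule product_nn_integral_prod[OF S(1)]) measurable
    also have "\<dots> \<le> (\<Prod>w\<in>S. ennreal (B * H powr (-p)))"
      by (rule prod_mono_ennreal) (rule dirD)
    finally show "(\<integral>\<^sup>+x. ?G (x(v := y)) \<partial>PiM S (\<lambda>_. D))
        \<le> ennreal ((norm y / H) powr p) * ennreal (B * H powr (-p)) ^ card S"
      by (simp add: mult_left_mono)
  qed
  also have "\<dots> = (\<integral>\<^sup>+y. ennreal ((norm y / H) powr p) \<partial>D) * ennreal (B * H powr (-p)) ^ card S"
    by (rule nn_integral_multc) measurable
  also have "\<dots> \<le> ennreal c * ennreal (B * H powr (-p)) ^ card S"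
    by (intro mult_right_mono normD) auto
  finally show ?thesis .
qed


lemma GH_cong:
  assumes "\<And>k. k \<in> {1..N} \<Longrightarrow> x k = y k"
  shows "GH_edges x N H = GH_edges y N H"
proof -
  have "(\<lambda>h. norm (x h)) ` {1..N} = (\<lambda>h. norm (y h)) ` {1..N}"
    using assms by (intro image_cong) auto
  then show ?thesis using assms unfolding GH_edges_def by fastforce
qed

lemma chrom_char:
  fixes x :: "nat \<Rightarrow> real ^ 'n"
  shows "chromatic_number {1..N} (GH_edges x N H) \<le> m \<longleftrightarrow>
    (\<exists>c\<in>{1..N} \<rightarrow>\<^sub>E {0..<m}. \<forall>i\<in>{1..N}. \<forall>j\<in>{1..N}. i < j \<and> c i = c j \<longrightarrow>
        \<not> (H * Max ((\<lambda>h. norm (x h)) ` {1..N}) < \<bar>x i \<bullet> x j\<bar>))"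
    (is "?L \<longleftrightarrow> ?R")
proof
  assume L: ?L
  have ex: "\<exists>k c. proper_colouring {1..N} (GH_edges x N H) k c"
    by (rule exI[of _ "Suc N"], rule exI[of _ id]) (auto simp: proper_colouring_def GH_edges_def)
  obtain c where c: "proper_colouring {1..N} (GH_edges x N H) (chromatic_number {1..N} (GH_edges x N H)) c"
    using LeastI_ex[OF ex] unfolding chromatic_number_def by blast
  show ?R
  proof (intro bexI[of _ "restrict c {1..N}"] ballI impI)
    show "restrict c {1..N} \<in> {1..N} \<rightarrow>\<^sub>E {0..<m}"
      using c L by (auto simp: proper_colouring_def)
  next
    fix i j assume ij: "i \<in> {1..N}" "j \<in> {1..N}" "i < j \<and> restrict c {1..N} i = restrict c {1..N} j"
    show "\<not> (H * Max ((\<lambda>h. norm (x h)) ` {1..N}) < \<bar>x i \<bullet> x j\<bar>)"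
    proof
      assume "H * Max ((\<lambda>h. norm (x h)) ` {1..N}) < \<bar>x i \<bullet> x j\<bar>"
      then have "(i,j) \<in> GH_edges x N H" using ij by (auto simp: GH_edges_def)
      then show False using c ij by (auto simp: proper_colouring_def)
    qed
  qed
next
  assume ?R
  then obtain c where c: "c \<in> {1..N} \<rightarrow>\<^sub>E {0..<m}" and
    cc: "\<forall>i\<in>{1..N}. \<forall>j\<in>{1..N}. i < j \<and> c i = c j \<longrightarrow>
        \<not> (H * Max ((\<lambda>h. norm (x h)) ` {1..N}) < \<bar>x i \<bullet> x j\<bar>)" by blast
  have "proper_colouring {1..N} (GH_edges x N H) m c"
    using c cc unfolding proper_colouring_def GH_edges_def by fastforce
  then have "\<exists>c. proper_colouring {1..N} (GH_edges x N H) m c" by blast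
  then show ?L unfolding chromatic_number_def by (rule Least_le)
qed

lemma bad_witness:
  fixes x :: "nat \<Rightarrow> real ^ 'n" and H p :: real
  assumes H: "H > 0" and p: "p > 0" and m: "m \<ge> 1"
    and bad: "\<not> chromatic_number {1..N} (GH_edges x N H) \<le> m"
  shows "\<exists>v\<in>{1..N}. \<exists>S. S \<subseteq> {1..N} - {v} \<and> card S = m \<and>
     1 \<le> ennreal ((norm (x v) / H) powr p) *
            (\<Prod>w\<in>S. ennreal ((\<bar>x w \<bullet> x v\<bar> / (H * norm (x v))) powr p))"
proof -
  let ?E = "GH_edges x N H"
  let ?f = "\<lambda>k. norm (x k)"
  let ?Mx = "Max ((\<lambda>h. norm (x h)) ` {1..N})"
  have "\<exists>v\<in>{1..N}. \<not> card {w\<in>{1..N}. w \<noteq> v \<and> ((w,v)\<in>?E \<or> (v,w)\<in>?E) \<and> ?f w \<le> ?f v} < m"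
  proof (rule ccontr)
    assume "\<not> ?thesis"
    then have deg: "\<And>v. v \<in> {1..N} \<Longrightarrow> card {w\<in>{1..N}. w \<noteq> v \<and> ((w,v)\<in>?E \<or> (v,w)\<in>?E) \<and> ?f w \<le> ?f v} < m"
      by blast
    obtain c where c: "\<forall>v\<in>{1..N}. c v < m" "\<forall>u\<in>{1..N}. \<forall>w\<in>{1..N}. (u,w)\<in>?E \<longrightarrow> c u \<noteq> c w"
      using greedy_colour[of "{1..N}" ?E ?f m, OF _ _ deg] by (auto simp: GH_edges_def)
    have "proper_colouring {1..N} ?E m c"
      using c unfolding proper_colouring_def by (auto simp: GH_edges_def)
    then have "\<exists>c. proper_colouring {1..N} ?E m c" by blast
    then have "chromatic_number {1..N} ?E \<le> m"
      unfolding chromatic_number_def by (rule Least_le)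
    then show False using bad by simp
  qed
  then obtain v where v: "v \<in> {1..N}" and
    cardge: "m \<le> card {w\<in>{1..N}. w \<noteq> v \<and> ((w,v)\<in>?E \<or> (v,w)\<in>?E) \<and> ?f w \<le> ?f v}"
    by (auto simp: not_less)
  obtain S where S: "S \<subseteq> {w\<in>{1..N}. w \<noteq> v \<and> ((w,v)\<in>?E \<or> (v,w)\<in>?E) \<and> ?f w \<le> ?f v}" "card S = m"
    using obtain_subset_with_card_n[OF cardge] by blast
  have Mx: "norm (x k) \<le> ?Mx" if "k \<in> {1..N}" for k
    using that by (intro Max_ge) auto
  have key: "norm (x v) > 0 \<and> norm (x w) > H \<and> H * norm (x v) < \<bar>x w \<bullet> x v\<bar>" if w: "w \<in> S" for w
  proof -
    have wN: "w \<in> {1..N}" and edge: "H * ?Mx < \<bar>x w \<bullet> x v\<bar>"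
      using S(1) w by (auto simp: GH_edges_def inner_commute)
    have cs: "\<bar>x w \<bullet> x v\<bar> \<le> norm (x w) * norm (x v)" by (rule Cauchy_Schwarz_ineq2)
    have hv: "H * norm (x v) \<le> H * ?Mx" using Mx[OF v] H by simp
    have nv: "norm (x v) > 0"
    proof (rule ccontr)
      assume "\<not> ?thesis" then have "x v = 0" by simp
      then show False using edge Mx[OF v] H by (smt (verit) norm_ge_zero mult_nonneg_nonneg inner_zero_right abs_zero)
    qed
    have "H * norm (x v) < norm (x w) * norm (x v)" using edge cs hv by linarith
    then have "H < norm (x w)" using nv by simp
    then show ?thesis using nv edge hv by linarith
  qed
  obtain w0 where w0: "w0 \<in> S" using S(2) m by (metis card.empty ex_in_conv not_one_le_zero)
  have wle: "norm (x w0) \<le> norm (x v)" using S(1) w0 by auto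
  have v1: "1 \<le> norm (x v) / H" using key[OF w0] wle H by simp
  have f1: "1 \<le> ennreal ((norm (x v) / H) powr p)"
    using ge_one_powr_ge_zero[OF v1, of p] p by simp
  have f2: "1 \<le> (\<Prod>w\<in>S. ennreal ((\<bar>x w \<bullet> x v\<bar> / (H * norm (x v))) powr p))"
  proof -
    have "(\<Prod>w\<in>S. (1::ennreal)) \<le> (\<Prod>w\<in>S. ennreal ((\<bar>x w \<bullet> x v\<bar> / (H * norm (x v))) powr p))"
    proof (rule prod_mono_ennreal)
      fix w assume w: "w \<in> S"
      have "1 \<le> \<bar>x w \<bullet> x v\<bar> / (H * norm (x v))"
        using key[OF w] H by (simp add: mult_pos_pos)
      then show "1 \<le> ennreal ((\<bar>x w \<bullet> x v\<bar> / (H * norm (x v))) powr p)"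
        using ge_one_powr_ge_zero[of _ p] p by simp
    qed
    then show ?thesis by simp
  qed
  have "(1::ennreal) \<le> 1 * 1" by simp
  also have "\<dots> \<le> ennreal ((norm (x v) / H) powr p) *
            (\<Prod>w\<in>S. ennreal ((\<bar>x w \<bullet> x v\<bar> / (H * norm (x v))) powr p))"
    by (rule mult_mono[OF f1 f2]) auto
  finally show ?thesis using v S by blast
qed


theorem proposition3p1:
  fixes M :: "'a measure" and X :: "'a \<Rightarrow> real ^ 'n" and Xs :: "nat \<Rightarrow> 'a \<Rightarrow> real ^ 'n"
    and N :: nat and p B H :: real and m :: nat
  assumes "prob_space M"
    and X_rv: "X \<in> borel_measurable M"
    and centered: "\<And>i. integrable M (\<lambda>\<omega>. X \<omega> $ i) \<and> prob_space.expectation M (\<lambda>\<omega>. X \<omega> $ i) = 0"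
    and isotropic: "\<And>i j. integrable M (\<lambda>\<omega>. X \<omega> $ i * X \<omega> $ j) \<and>
           prob_space.expectation M (\<lambda>\<omega>. X \<omega> $ i * X \<omega> $ j) = (if i = j then 1 else 0)"
    and Xs_rv: "\<And>k. k \<in> {1..N} \<Longrightarrow> Xs k \<in> borel_measurable M"
    and indep: "prob_space.indep_vars M (\<lambda>_. borel) Xs {1..N}"
    and copies: "\<And>k. k \<in> {1..N} \<Longrightarrow> distr M borel (Xs k) = distr M borel X"
    and p: "p > 2" and B: "B \<ge> 1"
    and moment: "\<And>y. norm y = 1 \<Longrightarrow>
           (\<integral>\<^sup>+\<omega>. ennreal (\<bar>X \<omega> \<bullet> y\<bar> powr p) \<partial>M) \<le> ennreal B"
    and H: "H > 0" and m: "m > 1"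
  shows "prob_space.prob M {\<omega> \<in> space M. chromatic_number {1..N} (GH_edges (\<lambda>k. Xs k \<omega>) N H) \<le> m}
           \<ge> 1 - (B * real N * H powr (-p)) ^ m * real CARD('n) powr (p / 2)"
proof -
  interpret prob_space M by fact
  note X_rv[measurable]
  define D where "D = distr M borel X"
  have PD: "prob_space D" unfolding D_def by (rule prob_space_distr) measurable
  have sets_D[measurable_cong]: "sets D = sets borel" by (simp add: D_def)
  define q where "q = B * H powr (-p)"
  define c where "c = real CARD('n) powr (p/2) * B * H powr (-p)"
  have q0: "q \<ge> 0" and c0: "c \<ge> 0" using B by (auto simp: q_def c_def)
  have dirD: "(\<integral>\<^sup>+z. ennreal ((\<bar>z \<bullet> u\<bar> / (H * norm u)) powr p) \<partial>D) \<le> ennreal q" for u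
  proof -
    have "(\<integral>\<^sup>+z. ennreal ((\<bar>z \<bullet> u\<bar> / (H * norm u)) powr p) \<partial>D)
        = (\<integral>\<^sup>+\<omega>. ennreal ((\<bar>X \<omega> \<bullet> u\<bar> / (H * norm u)) powr p) \<partial>M)"
      unfolding D_def by (rule nn_integral_distr) measurable
    also have "\<dots> \<le> ennreal q" unfolding q_def
      by (rule dir_moment[OF X_rv _ H _ moment]) (use p B in auto)
    finally show ?thesis .
  qed
  have normD: "(\<integral>\<^sup>+z. ennreal ((norm z / H) powr p) \<partial>D) \<le> ennreal c"
  proof -
    have "(\<integral>\<^sup>+z. ennreal ((norm z / H) powr p) \<partial>D)
        = (\<integral>\<^sup>+\<omega>. ennreal ((norm (X \<omega>) / H) powr p) \<partial>M)"
      unfolding D_def by (rule nn_integral_distr) measurable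
    also have "\<dots> = (\<integral>\<^sup>+\<omega>. ennreal (H powr (-p)) * ennreal (norm (X \<omega>) powr p) \<partial>M)"
    proof (intro nn_integral_cong)
      fix \<omega>
      have "(norm (X \<omega>) / H) powr p = norm (X \<omega>) powr p / H powr p"
        using H by (simp only: powr_divide norm_ge_zero less_imp_le)
      then have "(norm (X \<omega>) / H) powr p = H powr (-p) * norm (X \<omega>) powr p"
        by (simp add: powr_minus divide_inverse mult.commute)
      then show "ennreal ((norm (X \<omega>) / H) powr p) = ennreal (H powr (-p)) * ennreal (norm (X \<omega>) powr p)"
        by (simp add: ennreal_mult)
    qed
    also have "\<dots> = ennreal (H powr (-p)) * (\<integral>\<^sup>+\<omega>. ennreal (norm (X \<omega>) powr p) \<partial>M)"
      by (rule nn_integral_cmult) measurable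
    also have "\<dots> \<le> ennreal (H powr (-p)) * ennreal (real CARD('n) powr (p/2) * B)"
      by (intro mult_left_mono norm_moment[OF X_rv _ moment]) (use p in auto)
    also have "\<dots> = ennreal c"
      using B by (simp add: c_def ennreal_mult[symmetric] mult.commute mult.left_commute)
    finally show ?thesis .
  qed
  define g where "g v S \<omega> = ennreal ((norm (Xs v \<omega>) / H) powr p) *
            (\<Prod>w\<in>S. ennreal ((\<bar>Xs w \<omega> \<bullet> Xs v \<omega>\<bar> / (H * norm (Xs v \<omega>))) powr p))" for v S \<omega>
  define T where "T v = {S. S \<subseteq> {1..N} - {v} \<and> card S = m}" for v
  have int_g: "g v S \<in> borel_measurable M \<and> (\<integral>\<^sup>+\<omega>. g v S \<omega> \<partial>M) \<le> ennreal c * ennreal q ^ m"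
    if v: "v \<in> {1..N}" and S: "S \<in> T v" for v S
  proof -
    have SN: "S \<subseteq> {1..N}" "v \<notin> S" "card S = m" using S by (auto simp: T_def)
    have fS: "finite S" using SN(1) finite_subset by blast
    define J where "J = insert v S"
    have JN: "J \<subseteq> {1..N}" using SN v by (auto simp: J_def)
    define Y where "Y = (\<lambda>\<omega>. \<lambda>i\<in>J. Xs i \<omega>)"
    have Ymeas: "Y \<in> measurable M (PiM J (\<lambda>_. borel))"
      unfolding Y_def by (rule measurable_restrict) (use JN Xs_rv in auto)
    define Gf where "Gf = (\<lambda>x::nat \<Rightarrow> real ^ 'n. ennreal ((norm (x v) / H) powr p) *
            (\<Prod>w\<in>S. ennreal ((\<bar>x w \<bullet> x v\<bar> / (H * norm (x v))) powr p)))"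
    have Gmeas: "Gf \<in> borel_measurable (PiM J (\<lambda>_. borel))"
      unfolding Gf_def J_def by measurable
    have gY: "g v S \<omega> = Gf (Y \<omega>)" for \<omega>
      unfolding g_def Gf_def Y_def J_def by (intro arg_cong2[where f="(*)"] prod.cong) auto
    have gmeas: "g v S \<in> borel_measurable M"
      unfolding gY[abs_def] by (rule measurable_comp[OF Ymeas Gmeas, unfolded comp_def])
    have indJ: "indep_vars (\<lambda>_. borel) Xs J"
      by (rule indep_vars_subset[OF indep JN])
    have "distr M (PiM J (\<lambda>_. borel)) Y = PiM J (\<lambda>i. distr M borel (Xs i))"
      unfolding Y_def using indJ
      by (subst (asm) indep_vars_iff_distr_eq_PiM') (use JN Xs_rv in \<open>auto simp: J_def\<close>)
    also have "\<dots> = PiM J (\<lambda>_. D)"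
      by (rule PiM_cong) (use JN copies in \<open>auto simp: D_def\<close>)
    finally have dY: "distr M (PiM J (\<lambda>_. borel)) Y = PiM J (\<lambda>_. D)" .
    have "(\<integral>\<^sup>+\<omega>. g v S \<omega> \<partial>M) = (\<integral>\<^sup>+\<omega>. Gf (Y \<omega>) \<partial>M)" by (simp add: gY)
    also have "\<dots> = (\<integral>\<^sup>+x. Gf x \<partial>distr M (PiM J (\<lambda>_. borel)) Y)"
      by (rule nn_integral_distr[symmetric, OF Ymeas]) (use Gmeas in simp)
    also have "\<dots> = (\<integral>\<^sup>+x. Gf x \<partial>PiM J (\<lambda>_. D))" by (simp add: dY)
    also have "\<dots> \<le> ennreal c * ennreal q ^ card S"
      unfolding Gf_def J_def q_def
      by (rule core_integral[OF PD sets_D fS SN(2) _ dirD[unfolded q_def] normD]) (use B in auto)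
    finally show ?thesis using gmeas SN(3) by simp
  qed
  define A where "A = {\<omega> \<in> space M. chromatic_number {1..N} (GH_edges (\<lambda>k. Xs k \<omega>) N H) \<le> m}"
  define Z where "Z k = (if k \<in> {1..N} then Xs k else (\<lambda>_. 0))" for k
  have Zm[measurable]: "Z k \<in> borel_measurable M" for k
    using Xs_rv by (auto simp: Z_def)
  have "A = {\<omega> \<in> space M. \<exists>c\<in>{1..N} \<rightarrow>\<^sub>E {0..<m}. \<forall>i\<in>{1..N}. \<forall>j\<in>{1..N}. i < j \<and> c i = c j \<longrightarrow>
        \<not> (H * Max ((\<lambda>h. norm (Z h \<omega>)) ` {1..N}) < \<bar>Z i \<omega> \<bullet> Z j \<omega>\<bar>)}"
  proof -
    have "GH_edges (\<lambda>k. Xs k \<omega>) N H = GH_edges (\<lambda>k. Z k \<omega>) N H" for \<omega>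
      by (rule GH_cong) (simp add: Z_def)
    then have "A = {\<omega> \<in> space M. chromatic_number {1..N} (GH_edges (\<lambda>k. Z k \<omega>) N H) \<le> m}"
      unfolding A_def by simp
    then show ?thesis by (simp only: chrom_char)
  qed
  also have "\<dots> \<in> sets M"
  proof -
    have [simp]: "finite ({1..N} \<rightarrow>\<^sub>E {0..<m::nat})" by (simp add: finite_PiE)
    show ?thesis
      by (intro sets.sets_Collect_finite_Ex sets.sets_Collect_finite_All) (simp_all add: finite_PiE, measurable)
  qed
  finally have Ameas: "A \<in> sets M" .
  have fT: "finite (T v)" for v
    by (rule finite_subset[of _ "Pow {1..N}"]) (auto simp: T_def)
  have "emeasure M (space M - A) = (\<integral>\<^sup>+\<omega>. indicator (space M - A) \<omega> \<partial>M)"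
    using Ameas by simp
  also have "\<dots> \<le> (\<integral>\<^sup>+\<omega>. (\<Sum>v\<in>{1..N}. \<Sum>S\<in>T v. g v S \<omega>) \<partial>M)"
  proof (rule nn_integral_mono)
    fix \<omega> assume \<omega>: "\<omega> \<in> space M"
    show "indicator (space M - A) \<omega> \<le> (\<Sum>v\<in>{1..N}. \<Sum>S\<in>T v. g v S \<omega>)"
    proof (cases "\<omega> \<in> A")
      case True then show ?thesis by simp
    next
      case False
      then have bad: "\<not> chromatic_number {1..N} (GH_edges (\<lambda>k. Xs k \<omega>) N H) \<le> m"
        using \<omega> by (simp add: A_def)
      obtain v S where v: "v \<in> {1..N}" and S: "S \<subseteq> {1..N} - {v}" "card S = m" and
        g1: "1 \<le> g v S \<omega>"
        using bad_witness[OF H _ _ bad, of p] p m unfolding g_def by auto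
      have ST: "S \<in> T v" using S by (simp add: T_def)
      have "g v S \<omega> \<le> (\<Sum>S\<in>T v. g v S \<omega>)"
        by (rule member_le_sum[OF ST _ fT]) simp
      also have "\<dots> \<le> (\<Sum>v\<in>{1..N}. \<Sum>S\<in>T v. g v S \<omega>)"
        by (rule member_le_sum[OF v]) auto
      finally show ?thesis using g1 False \<omega> by simp
    qed
  qed
  also have "\<dots> = (\<Sum>v\<in>{1..N}. \<Sum>S\<in>T v. (\<integral>\<^sup>+\<omega>. g v S \<omega> \<partial>M))"
  proof -
    have "(\<integral>\<^sup>+\<omega>. (\<Sum>v\<in>{1..N}. \<Sum>S\<in>T v. g v S \<omega>) \<partial>M) = (\<Sum>v\<in>{1..N}. (\<integral>\<^sup>+\<omega>. (\<Sum>S\<in>T v. g v S \<omega>) \<partial>M))"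
      by (rule nn_integral_sum) (use int_g in \<open>auto intro!: borel_measurable_sum\<close>)
    also have "\<dots> = (\<Sum>v\<in>{1..N}. \<Sum>S\<in>T v. (\<integral>\<^sup>+\<omega>. g v S \<omega> \<partial>M))"
      by (intro sum.cong refl nn_integral_sum) (use int_g in auto)
    finally show ?thesis .
  qed
  also have "\<dots> \<le> (\<Sum>v\<in>{1..N}. \<Sum>S\<in>T v. ennreal c * ennreal q ^ m)"
    by (intro sum_mono) (use int_g in auto)
  also have "\<dots> = ennreal (real N * real ((N - 1) choose m) * (c * q ^ m))"
  proof -
    have cT: "card (T v) = (N - 1) choose m" if "v \<in> {1..N}" for v
    proof -
      have "card (T v) = card ({1..N} - {v}) choose m" unfolding T_def by (rule n_subsets) simp
      then show ?thesis using that by simp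
    qed
    have "(\<Sum>v\<in>{1..N}. \<Sum>S\<in>T v. ennreal c * ennreal q ^ m) = (\<Sum>v\<in>{1..N}. ennreal (real ((N - 1) choose m) * (c * q ^ m)))"
      using cT c0 q0 by (intro sum.cong refl) (simp add: ennreal_mult ennreal_power ennreal_of_nat_eq_real_of_nat)
    also have "\<dots> = ennreal (real N * real ((N - 1) choose m) * (c * q ^ m))"
      using c0 q0 by (simp add: ennreal_of_nat_eq_real_of_nat ennreal_mult[symmetric])
    finally show ?thesis .
  qed
  finally have em: "emeasure M (space M - A) \<le> ennreal (real N * real ((N - 1) choose m) * (c * q ^ m))" .
  define K where "K = real N * real ((N - 1) choose m) * (c * q ^ m)"
  have K0: "K \<ge> 0" using c0 q0 by (simp add: K_def)
  have pK: "prob (space M - A) \<le> K"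
    using em K0 by (simp add: emeasure_eq_measure K_def)
  have pA: "prob A \<ge> 1 - K" using prob_compl[OF Ameas] pK by simp
  define x where "x = B * real N * H powr (-p)"
  define n2 where "n2 = real CARD('n) powr (p / 2)"
  have x0: "x \<ge> 0" using B by (auto simp: x_def)
  have n21: "n2 \<ge> 1" unfolding n2_def
    by (rule ge_one_powr_ge_zero) (use p in \<open>auto simp: Suc_le_eq\<close>)
  have "prob A \<ge> 1 - x ^ m * n2"
  proof (cases "x \<le> 1")
    case True
    have ch: "real ((N - 1) choose m) \<le> real N ^ m"
    proof (cases "m \<le> N - 1")
      case True
      have "(N - 1) choose m \<le> (N - 1) ^ m" by (rule binomial_le_pow[OF True])
      also have "\<dots> \<le> N ^ m" by (rule power_mono) auto
      finally show ?thesis by (metis of_nat_le_iff of_nat_power)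
    next
      case False then have "(N - 1) choose m = 0" by (intro binomial_eq_0) simp
      then have "real ((N - 1) choose m) = 0" by (simp only: of_nat_0)
      then show ?thesis by (subst \<open>real ((N - 1) choose m) = 0\<close>) simp
    qed
    have "K \<le> real N * real N ^ m * (c * q ^ m)"
      unfolding K_def using c0 q0 ch by (intro mult_right_mono mult_left_mono) auto
    also have "\<dots> = x ^ (Suc m) * n2"
      by (simp add: x_def n2_def c_def q_def power_mult_distrib field_simps)
    also have "\<dots> \<le> x ^ m * n2"
      using True x0 n21 by (intro mult_right_mono power_decreasing) auto
    finally show ?thesis using pA by simp
  next
    case False
    then have "1 \<le> x ^ m" by (simp add: one_le_power)
    then have "1 \<le> x ^ m * n2" using mult_mono[of 1 "x ^ m" 1 n2] n21 by simp
    then show ?thesis using measure_nonneg[of M A] by linarith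
  qed
  then show ?thesis unfolding A_def x_def n2_def by simp
qed

end
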